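(* Let $\langle S,L,\tau,\ell\rangle$ be a labelled Markov chain. Robust bisimilarity $\simeq$ is a probabilistic bisimulation; in particular it is an equivalence relation, and hence $\simeq\,\subseteq\,\sim$.
   Context: Labelled Markov chain $\langle S,L,\tau,\ell\rangle$: finite state set $S$, finite label set $L$, $\tau:S\to\mathcal{D}(S)$, $\ell:S\to L$, with $|\ell(S)|\ge2$. $\Omega(\mu,\nu)$ = couplings of $\mu,\nu$ (distributions on $S\times S$ with marginals $\mu,\nu$). A probabilistic bisimulation is an equivalence relation $R\subseteq S\times S$ such that for all $(s,t)\in R$, $\ell(s)=\ell(t)$ and there is $\omega\in\Omega(\tau(s),\tau(t))$ with $\mathrm{support}(\omega)\subseteq R$; $s\sim t$ iff $(s,t)\in R$ for some bisimulation $R$. Let $S^2_\Delta=\{(s,s)\}$, $S^2_1=\{(s,t)\mid\ell(s)\ne\ell(t)\}$, $S^2_{0?}=(S\times S)\setminus(S^2_\Delta\cup S^2_1)$. A policy is $P:S\times S\to\mathcal{D}(S\times S)$ with $P(s,t)\in\Omega(\tau(s),\tau(t))$ for $(s,t)\notin S^2_1$ and $P(s,t)$ the point mass at $(s,t)$ for $(s,t)\in S^2_1$; $\mathcal{P}$ is the set of policies and each $P$ induces a Markov chain $\langle S\times S,P\rangle$. Robust bisimilarity: $s\simeq t$ iff there is $P\in\mathcal{P}$ such that $(s,t)$ reaches $S^2_\Delta$ with probability $1$ in $\langle S\times S,P\rangle$. *)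

theory Defs
  imports "HOL-Probability.Probability"
begin

definition couplings :: "'s pmf \<Rightarrow> 's pmf \<Rightarrow> ('s \<times> 's) pmf set" where
  "couplings \<mu> \<nu> = {\<omega>. map_pmf fst \<omega> = \<mu> \<and> map_pmf snd \<omega> = \<nu>}"

definition prob_bisimulation ::
  "('s \<Rightarrow> 's pmf) \<Rightarrow> ('s \<Rightarrow> 'l) \<Rightarrow> ('s \<times> 's) set \<Rightarrow> bool" where
  "prob_bisimulation \<tau> lab R \<longleftrightarrow> equiv UNIV R \<and>
     (\<forall>(s,t)\<in>R. lab s = lab t \<and> (\<exists>\<omega>\<in>couplings (\<tau> s) (\<tau> t). set_pmf \<omega> \<subseteq> R))"

definition bisimilar :: "('s \<Rightarrow> 's pmf) \<Rightarrow> ('s \<Rightarrow> 'l) \<Rightarrow> 's \<Rightarrow> 's \<Rightarrow> bool" where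
  "bisimilar \<tau> lab s t \<longleftrightarrow> (\<exists>R. prob_bisimulation \<tau> lab R \<and> (s,t) \<in> R)"

definition diag_pairs :: "('s \<times> 's) set" where
  "diag_pairs = {(s,s) | s. True}"

definition diff_label_pairs :: "('s \<Rightarrow> 'l) \<Rightarrow> ('s \<times> 's) set" where
  "diff_label_pairs lab = {(s,t). lab s \<noteq> lab t}"

definition is_policy ::
  "('s \<Rightarrow> 's pmf) \<Rightarrow> ('s \<Rightarrow> 'l) \<Rightarrow> ('s \<times> 's \<Rightarrow> ('s \<times> 's) pmf) \<Rightarrow> bool" where
  "is_policy \<tau> lab P \<longleftrightarrow>
     (\<forall>s t. (s,t) \<notin> diff_label_pairs lab \<longrightarrow> P (s,t) \<in> couplings (\<tau> s) (\<tau> t)) \<and>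
     (\<forall>s t. (s,t) \<in> diff_label_pairs lab \<longrightarrow> P (s,t) = return_pmf (s,t))"

fun reach_within :: "('a::finite \<Rightarrow> 'a pmf) \<Rightarrow> 'a set \<Rightarrow> nat \<Rightarrow> 'a \<Rightarrow> real" where
  "reach_within M T 0 u = (if u \<in> T then 1 else 0)"
| "reach_within M T (Suc n) u =
     (if u \<in> T then 1 else (\<Sum>v\<in>UNIV. pmf (M u) v * reach_within M T n v))"

definition reaches_as :: "('a::finite \<Rightarrow> 'a pmf) \<Rightarrow> 'a set \<Rightarrow> 'a \<Rightarrow> bool" where
  "reaches_as M T u \<longleftrightarrow> (\<lambda>n. reach_within M T n u) \<longlonglongrightarrow> 1"

definition robust_bisimilar ::
  "('s::finite \<Rightarrow> 's pmf) \<Rightarrow> ('s \<Rightarrow> 'l) \<Rightarrow> 's \<Rightarrow> 's \<Rightarrow> bool" where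
  "robust_bisimilar \<tau> lab s t \<longleftrightarrow>
     (\<exists>P. is_policy \<tau> lab P \<and> reaches_as P diag_pairs (s,t))"

end

theory Submission
  imports Defs
begin


lemma rw_T: "u \<in> T \<Longrightarrow> reach_within M T n u = 1"
  by (cases n) auto

lemma sum1: "(\<Sum>v\<in>UNIV. pmf (p::('a::finite) pmf) v) = 1"
  by (rule sum_pmf_eq_1) auto

lemma rw_bounds: "0 \<le> reach_within M T n u \<and> reach_within M T n u \<le> 1"
proof (induction n arbitrary: u)
  case 0 then show ?case by simp
next
  case (Suc n)
  have "(\<Sum>v\<in>UNIV. pmf (M u) v * reach_within M T n v) \<le> (\<Sum>v\<in>UNIV. pmf (M u) v)"
    by (intro sum_mono) (simp add: Suc.IH mult_left_le pmf_nonneg)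
  moreover have "0 \<le> (\<Sum>v\<in>UNIV. pmf (M u) v * reach_within M T n v)"
    by (intro sum_nonneg) (simp add: Suc.IH)
  ultimately show ?case using sum1[of "M u"] by simp
qed

lemma rw_fail: "u \<notin> T \<Longrightarrow> 1 - reach_within M T (Suc n) u = (\<Sum>v\<in>UNIV. pmf (M u) v * (1 - reach_within M T n v))"
proof -
  assume "u \<notin> T"
  have "(\<Sum>v\<in>UNIV. pmf (M u) v * (1 - reach_within M T n v)) = (\<Sum>v\<in>UNIV. pmf (M u) v) - (\<Sum>v\<in>UNIV. pmf (M u) v * reach_within M T n v)"
    by (simp add: algebra_simps sum_subtractf)
  then show ?thesis using sum1[of "M u"] \<open>u \<notin> T\<close> by simp
qed

lemma rw_mono_Suc: "reach_within M T n u \<le> reach_within M T (Suc n) u"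
proof (induction n arbitrary: u)
  case 0 then show ?case using rw_bounds[of M T "Suc 0" u] by auto
next
  case (Suc n)
  show ?case
  proof (cases "u \<in> T")
    case False
    have "(\<Sum>v\<in>UNIV. pmf (M u) v * reach_within M T n v) \<le> (\<Sum>v\<in>UNIV. pmf (M u) v * reach_within M T (Suc n) v)"
      by (intro sum_mono mult_left_mono Suc.IH pmf_nonneg)
    then show ?thesis by (simp only: reach_within.simps(2) False if_False)
  qed simp
qed

lemma rw_mono: "n \<le> m \<Longrightarrow> reach_within M T n u \<le> reach_within M T m u"
proof (induction m)
  case 0 then show ?case by simp
next
  case (Suc m) then show ?case using rw_mono_Suc[of M T m u] by (cases "n = Suc m") auto
qed

lemma rw_mult:
  assumes cl: "\<And>x. x \<in> X \<Longrightarrow> x \<notin> T \<Longrightarrow> set_pmf (M x) \<subseteq> X"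
    and c: "\<And>y. y \<in> X \<Longrightarrow> 1 - reach_within M T m y \<le> c" and c0: "0 \<le> c"
  shows "x \<in> X \<Longrightarrow> 1 - reach_within M T (n + m) x \<le> (1 - reach_within M T n x) * c"
proof (induction n arbitrary: x)
  case 0 then show ?case using c by (cases "x \<in> T") (auto simp: rw_T)
next
  case (Suc n)
  show ?case
  proof (cases "x \<in> T")
    case True then show ?thesis by (simp add: rw_T)
  next
    case False
    have "1 - reach_within M T (Suc (n + m)) x = (\<Sum>v\<in>UNIV. pmf (M x) v * (1 - reach_within M T (n+m) v))"
      using rw_fail[OF False] by blast
    also have "\<dots> \<le> (\<Sum>v\<in>UNIV. pmf (M x) v * ((1 - reach_within M T n v) * c))"
    proof (intro sum_mono)
      fix v
      show "pmf (M x) v * (1 - reach_within M T (n + m) v) \<le> pmf (M x) v * ((1 - reach_within M T n v) * c)"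
      proof (cases "v \<in> set_pmf (M x)")
        case True
        then have "v \<in> X" using cl[OF Suc.prems False] by blast
        then show ?thesis using Suc.IH by (intro mult_left_mono) auto
      next
        case False then show ?thesis by (simp add: set_pmf_iff)
      qed
    qed
    also have "\<dots> = (1 - reach_within M T (Suc n) x) * c"
      using rw_fail[OF False, of M n] by (simp add: sum_distrib_right mult.assoc)
    finally show ?thesis by simp
  qed
qed


lemma rank_pos:
  fixes M :: "'a::finite \<Rightarrow> 'a pmf" and rank :: "'a \<Rightarrow> nat"
  assumes cl: "\<And>x. x \<in> X \<Longrightarrow> x \<notin> T \<Longrightarrow> set_pmf (M x) \<subseteq> X"
    and pr: "\<And>x. x \<in> X \<Longrightarrow> x \<notin> T \<Longrightarrow> \<exists>v\<in>set_pmf (M x). rank v < rank x"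
  shows "x \<in> X \<Longrightarrow> rank x \<le> k \<Longrightarrow> reach_within M T k x > 0"
proof (induction k arbitrary: x)
  case 0
  then have "x \<in> T" using pr[of x] by fastforce
  then show ?case by (simp add: rw_T)
next
  case (Suc k)
  show ?case
  proof (cases "x \<in> T")
    case True then show ?thesis by (simp add: rw_T)
  next
    case False
    obtain v where v: "v \<in> set_pmf (M x)" "rank v < rank x" using pr[OF Suc.prems(1) False] by blast
    have vX: "v \<in> X" using cl[OF Suc.prems(1) False] v(1) by blast
    have rv: "reach_within M T k v > 0" using Suc.IH[OF vX] v(2) Suc.prems(2) by simp
    have pv: "pmf (M x) v > 0" using v(1) by (simp add: pmf_positive)
    have "0 < pmf (M x) v * reach_within M T k v" using pv rv by simp
    also have "\<dots> \<le> (\<Sum>w\<in>UNIV. pmf (M x) w * reach_within M T k w)"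
      by (rule member_le_sum) (auto simp: rw_bounds)
    finally show ?thesis using False by simp
  qed
qed

lemma rank_reach:
  fixes M :: "'a::finite \<Rightarrow> 'a pmf" and rank :: "'a \<Rightarrow> nat"
  assumes cl: "\<And>x. x \<in> X \<Longrightarrow> x \<notin> T \<Longrightarrow> set_pmf (M x) \<subseteq> X"
    and pr: "\<And>x. x \<in> X \<Longrightarrow> x \<notin> T \<Longrightarrow> \<exists>v\<in>set_pmf (M x). rank v < rank x"
    and xX: "x \<in> X"
  shows "reaches_as M T x"
proof -
  have fin: "finite X" by simp
  define N where "N = Suc (Max (rank ` X))"
  have Npos: "N > 0" by (simp add: N_def)
  have posN: "reach_within M T N y > 0" if "y \<in> X" for y
  proof -
    have "rank y \<le> N" using that fin unfolding N_def by (simp add: le_SucI)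
    then show ?thesis using rank_pos[OF cl pr that] by blast
  qed
  define c where "c = Max ((\<lambda>y. 1 - reach_within M T N y) ` X)"
  have cb: "1 - reach_within M T N y \<le> c" if "y \<in> X" for y
    unfolding c_def using fin that by (intro Max_ge) auto
  have c0: "0 \<le> c" using cb[OF xX] rw_bounds[of M T N x] by linarith
  have c1: "c < 1"
  proof -
    have "c \<in> (\<lambda>y. 1 - reach_within M T N y) ` X" unfolding c_def using fin xX by (intro Max_in) auto
    then show ?thesis using posN by auto
  qed
  have geo: "1 - reach_within M T (k*N) x \<le> c^k" for k
  proof (induction k)
    case 0 then show ?case using rw_bounds[of M T 0 x] by simp
  next
    case (Suc k)
    have "1 - reach_within M T (k*N + N) x \<le> (1 - reach_within M T (k*N) x) * c"
      by (rule rw_mult[OF cl cb c0 xX])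
    also have "\<dots> \<le> c^k * c" using Suc.IH c0 by (intro mult_right_mono) auto
    finally show ?case by (simp add: add.commute mult.commute)
  qed
  have bnd: "1 - reach_within M T n x \<le> c^(n div N)" for n
  proof -
    have "(n div N) * N \<le> n" by simp
    then have "reach_within M T ((n div N) * N) x \<le> reach_within M T n x" by (rule rw_mono)
    then show ?thesis using geo[of "n div N"] by linarith
  qed
  have "norm c < 1" using c0 c1 by simp
  from filterlim_compose[OF LIMSEQ_power_zero[OF this] filterlim_at_top_div_const_nat[OF Npos]]
  have l0: "(\<lambda>n. c^(n div N)) \<longlonglongrightarrow> 0" by (simp add: o_def)
  have e1: "\<forall>\<^sub>F n in sequentially. 0 \<le> 1 - reach_within M T n x"
    by (intro always_eventually allI) (simp add: rw_bounds)
  have e2: "\<forall>\<^sub>F n in sequentially. 1 - reach_within M T n x \<le> c^(n div N)"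
    by (intro always_eventually allI) (rule bnd)
  have "(\<lambda>n. 1 - reach_within M T n x) \<longlonglongrightarrow> 0"
    by (rule tendsto_sandwich[OF e1 e2 tendsto_const l0])
  then have "(\<lambda>n. 1 - (1 - reach_within M T n x)) \<longlonglongrightarrow> 1 - 0"
    by (intro tendsto_diff tendsto_const)
  then show ?thesis unfolding reaches_as_def by simp
qed

lemma reach_succ:
  fixes M :: "'a::finite \<Rightarrow> 'a pmf"
  assumes r: "reaches_as M T x" and xT: "x \<notin> T" and v: "v \<in> set_pmf (M x)"
  shows "reaches_as M T v"
proof -
  define p where "p = pmf (M x) v"
  have p: "p > 0" using v by (simp add: p_def pmf_positive)
  have le: "1 - reach_within M T n v \<le> (1 - reach_within M T (Suc n) x) / p" for n
  proof -
    have "p * (1 - reach_within M T n v) \<le> (\<Sum>w\<in>UNIV. pmf (M x) w * (1 - reach_within M T n w))"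
      unfolding p_def by (rule member_le_sum) (auto simp: rw_bounds)
    also have "\<dots> = 1 - reach_within M T (Suc n) x" using rw_fail[OF xT] by simp
    finally show ?thesis using p by (simp add: field_simps)
  qed
  have "(\<lambda>n. reach_within M T (Suc n) x) \<longlonglongrightarrow> 1" using r unfolding reaches_as_def by (rule LIMSEQ_Suc)
  then have "(\<lambda>n. (1 - reach_within M T (Suc n) x) / p) \<longlonglongrightarrow> (1 - 1) / p"
    using p by (intro tendsto_divide tendsto_diff tendsto_const) auto
  then have l0: "(\<lambda>n. (1 - reach_within M T (Suc n) x) / p) \<longlonglongrightarrow> 0" by simp
  have e1: "\<forall>\<^sub>F n in sequentially. 0 \<le> 1 - reach_within M T n v"
    by (intro always_eventually allI) (simp add: rw_bounds)
  have e2: "\<forall>\<^sub>F n in sequentially. 1 - reach_within M T n v \<le> (1 - reach_within M T (Suc n) x) / p"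
    by (intro always_eventually allI) (rule le)
  have "(\<lambda>n. 1 - reach_within M T n v) \<longlonglongrightarrow> 0"
    by (rule tendsto_sandwich[OF e1 e2 tendsto_const l0])
  then have "(\<lambda>n. 1 - (1 - reach_within M T n v)) \<longlonglongrightarrow> 1 - 0"
    by (intro tendsto_diff tendsto_const)
  then show ?thesis unfolding reaches_as_def by simp
qed




lemma glue:
  assumes c1: "\<omega>1 \<in> couplings \<mu> \<nu>" and c2: "\<omega>2 \<in> couplings \<nu> \<rho>"
  shows "\<exists>\<omega>\<in>couplings \<mu> \<rho>. set_pmf \<omega> = {(a,c). \<exists>b. (a,b) \<in> set_pmf \<omega>1 \<and> (b,c) \<in> set_pmf \<omega>2}"
proof -
  have p: "\<mu> = map_pmf fst \<omega>1" and q: "\<nu> = map_pmf snd \<omega>1"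
    and q': "\<nu> = map_pmf fst \<omega>2" and r: "\<rho> = map_pmf snd \<omega>2"
    using c1 c2 by (auto simp: couplings_def)
  define pr where "pr =
        bind_pmf \<omega>1 (\<lambda>xy. bind_pmf (cond_pmf \<omega>2 {yz. fst yz = snd xy})
          (\<lambda>yz. return_pmf (fst xy, snd yz)))"
  have pr_welldefined: "\<And>y. y \<in> set_pmf \<nu> \<Longrightarrow> set_pmf \<omega>2 \<inter> {yz. fst yz = y} \<noteq> {}"
    by (force simp: q')
  have "set_pmf pr = {(a,c). \<exists>b. (a,b) \<in> set_pmf \<omega>1 \<and> (b,c) \<in> set_pmf \<omega>2}"
  proof (intro equalityI subsetI)
    fix z assume "z \<in> set_pmf pr"
    then show "z \<in> {(a,c). \<exists>b. (a,b) \<in> set_pmf \<omega>1 \<and> (b,c) \<in> set_pmf \<omega>2}"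
      by (auto simp: q pr_welldefined pr_def split_beta)
  next
    fix z assume "z \<in> {(a,c). \<exists>b. (a,b) \<in> set_pmf \<omega>1 \<and> (b,c) \<in> set_pmf \<omega>2}"
    then obtain a b c where z: "z = (a,c)" "(a,b) \<in> set_pmf \<omega>1" "(b,c) \<in> set_pmf \<omega>2" by blast
    have "b \<in> set_pmf \<nu>" using z(2) q by force
    then have cond: "(b,c) \<in> set_pmf (cond_pmf \<omega>2 {yz. fst yz = b})"
      using set_cond_pmf[OF pr_welldefined] z(3) by auto
    have "(a,c) \<in> set_pmf (bind_pmf (cond_pmf \<omega>2 {yz. fst yz = snd (a,b)}) (\<lambda>yz. return_pmf (fst (a,b), snd yz)))"
      using cond unfolding set_bind_pmf by force
    then show "z \<in> set_pmf pr" unfolding pr_def set_bind_pmf [of \<omega>1] using z(1,2) by blast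
  qed
  moreover have "map_pmf snd pr = \<rho>"
  proof -
    have "map_pmf snd pr = map_pmf snd (bind_pmf \<nu> (\<lambda>y. cond_pmf \<omega>2 {yz. fst yz = y}))"
      by (simp add: pr_def q split_beta bind_map_pmf map_pmf_def[symmetric] map_bind_pmf map_pmf_comp)
    then show "map_pmf snd pr = \<rho>"
      unfolding r q' bind_map_pmf by (subst (asm) bind_cond_pmf_cancel) (auto simp: eq_commute)
  qed
  moreover have "map_pmf fst pr = \<mu>"
    by (simp add: pr_def map_bind_pmf split_beta map_pmf_def[symmetric] p map_pmf_comp)
  ultimately show ?thesis unfolding couplings_def by blast
qed

lemma coup_eqs: "\<omega> \<in> couplings \<mu> \<nu> \<Longrightarrow> \<mu> = map_pmf fst \<omega> \<and> \<nu> = map_pmf snd \<omega>"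
  unfolding couplings_def by simp

lemma coup_snd: "\<omega> \<in> couplings \<mu> \<nu> \<Longrightarrow> (a,b) \<in> set_pmf \<omega> \<Longrightarrow> b \<in> set_pmf \<nu>"
proof -
  assume "\<omega> \<in> couplings \<mu> \<nu>" "(a,b) \<in> set_pmf \<omega>"
  then show ?thesis using coup_eqs[of \<omega> \<mu> \<nu>] by (simp add: rev_image_eqI)
qed

lemma coup_fst: "\<omega> \<in> couplings \<mu> \<nu> \<Longrightarrow> (a,b) \<in> set_pmf \<omega> \<Longrightarrow> a \<in> set_pmf \<mu>"
proof -
  assume "\<omega> \<in> couplings \<mu> \<nu>" "(a,b) \<in> set_pmf \<omega>"
  then show ?thesis using coup_eqs[of \<omega> \<mu> \<nu>] by (simp add: rev_image_eqI)
qed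

lemma coup_snd_ex: "\<omega> \<in> couplings \<mu> \<nu> \<Longrightarrow> b \<in> set_pmf \<nu> \<Longrightarrow> \<exists>a. (a,b) \<in> set_pmf \<omega>"
proof -
  assume "\<omega> \<in> couplings \<mu> \<nu>" "b \<in> set_pmf \<nu>"
  then have "b \<in> snd ` set_pmf \<omega>" using coup_eqs[of \<omega> \<mu> \<nu>] by simp
  then show ?thesis by force
qed

lemma coup_fst_ex: "\<omega> \<in> couplings \<mu> \<nu> \<Longrightarrow> a \<in> set_pmf \<mu> \<Longrightarrow> \<exists>b. (a,b) \<in> set_pmf \<omega>"
proof -
  assume "\<omega> \<in> couplings \<mu> \<nu>" "a \<in> set_pmf \<mu>"
  then have "a \<in> fst ` set_pmf \<omega>" using coup_eqs[of \<omega> \<mu> \<nu>] by simp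
  then show ?thesis by force
qed

lemma diag_coup: "map_pmf (\<lambda>a. (a,a)) \<mu> \<in> couplings \<mu> \<mu>"
  unfolding couplings_def by (simp add: pmf.map_comp o_def)

lemma diag_iff[simp]: "(a,b) \<in> diag_pairs \<longleftrightarrow> a = b" by (auto simp: diag_pairs_def)

lemma sum_swap: "(\<Sum>v\<in>UNIV. f (prod.swap v)) = (\<Sum>v\<in>(UNIV::('a::finite \<times> 'b::finite) set). f v)"
  by (rule sum.reindex_bij_witness[where i=prod.swap and j=prod.swap]) auto

lemma pmf_swap: "pmf (map_pmf prod.swap p) v = pmf p (prod.swap v)"
  using pmf_map_inj'[of prod.swap p "prod.swap v"] by simp

definition P0 :: "('s \<Rightarrow> 's pmf) \<Rightarrow> ('s \<Rightarrow> 'l) \<Rightarrow> 's \<times> 's \<Rightarrow> ('s \<times> 's) pmf" where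
  "P0 \<tau> lab x = (if lab (fst x) \<noteq> lab (snd x) then return_pmf x else pair_pmf (\<tau> (fst x)) (\<tau> (snd x)))"

definition dd :: "('s::finite \<Rightarrow> 's pmf) \<Rightarrow> ('s \<Rightarrow> 'l) \<Rightarrow> 's \<times> 's \<Rightarrow> nat" where
  "dd \<tau> lab x = (LEAST n. \<exists>P. is_policy \<tau> lab P \<and> reaches_as P diag_pairs x \<and> reach_within P diag_pairs n x > 0)"

context
  fixes \<tau> :: "'s::finite \<Rightarrow> 's pmf" and lab :: "'s \<Rightarrow> 'l"
begin

lemma P0_policy: "is_policy \<tau> lab (P0 \<tau> lab)"
  unfolding is_policy_def
proof (intro conjI allI impI)
  fix s t assume "(s,t) \<notin> diff_label_pairs lab"
  then show "P0 \<tau> lab (s,t) \<in> couplings (\<tau> s) (\<tau> t)"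
    by (simp add: P0_def couplings_def diff_label_pairs_def map_fst_pair_pmf map_snd_pair_pmf)
next
  fix s t assume "(s,t) \<in> diff_label_pairs lab"
  then show "P0 \<tau> lab (s,t) = return_pmf (s,t)"
    by (simp add: P0_def diff_label_pairs_def)
qed

lemma reach_diag: "reaches_as P diag_pairs (a,a)"
  unfolding reaches_as_def by (simp add: rw_T)

lemma rob_refl: "robust_bisimilar \<tau> lab s s"
  unfolding robust_bisimilar_def using P0_policy reach_diag by blast

lemma rob_sym:
  assumes "robust_bisimilar \<tau> lab s t"
  shows "robust_bisimilar \<tau> lab t s"
proof -
  obtain P where P: "is_policy \<tau> lab P" "reaches_as P diag_pairs (s,t)"
    using assms unfolding robust_bisimilar_def by blast
  define P' where "P' = (\<lambda>x. map_pmf prod.swap (P (prod.swap x)))"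
  have pol: "is_policy \<tau> lab P'"
    unfolding is_policy_def
  proof (intro conjI allI impI)
    fix a b assume "(a,b) \<notin> diff_label_pairs lab"
    then have "(b,a) \<notin> diff_label_pairs lab" by (auto simp: diff_label_pairs_def)
    then have "P (b,a) \<in> couplings (\<tau> b) (\<tau> a)" using P(1) unfolding is_policy_def by blast
    then show "P' (a,b) \<in> couplings (\<tau> a) (\<tau> b)"
      unfolding P'_def couplings_def by (simp add: pmf.map_comp o_def)
  next
    fix a b assume "(a,b) \<in> diff_label_pairs lab"
    then have "(b,a) \<in> diff_label_pairs lab" by (auto simp: diff_label_pairs_def)
    then have "P (b,a) = return_pmf (b,a)" using P(1) unfolding is_policy_def by blast
    then show "P' (a,b) = return_pmf (a,b)" unfolding P'_def by simp
  qed
  have eq: "reach_within P' diag_pairs n x = reach_within P diag_pairs n (prod.swap x)" for n x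
  proof (induction n arbitrary: x)
    case 0
    have "x \<in> diag_pairs \<longleftrightarrow> prod.swap x \<in> diag_pairs" by (cases x) auto
    then show ?case by simp
  next
    case (Suc n)
    have d: "x \<in> diag_pairs \<longleftrightarrow> prod.swap x \<in> diag_pairs" by (cases x) auto
    have "(\<Sum>v\<in>UNIV. pmf (P' x) v * reach_within P' diag_pairs n v)
        = (\<Sum>v\<in>UNIV. pmf (P (prod.swap x)) (prod.swap v) * reach_within P diag_pairs n (prod.swap v))"
      unfolding Suc.IH unfolding P'_def pmf_swap by (rule refl)
    also have "\<dots> = (\<Sum>v\<in>UNIV. pmf (P (prod.swap x)) v * reach_within P diag_pairs n v)"
      by (rule sum_swap[where f="\<lambda>v. pmf (P (prod.swap x)) v * reach_within P diag_pairs n v"])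
    finally show ?case using d by (simp only: reach_within.simps(2))
  qed
  have "reaches_as P' diag_pairs (t,s)"
    using P(2) unfolding reaches_as_def eq by simp
  then show ?thesis using pol unfolding robust_bisimilar_def by blast
qed

end




context
  fixes \<tau> :: "'s::finite \<Rightarrow> 's pmf" and lab :: "'s \<Rightarrow> 'l"
begin

lemma rob_lab:
  assumes "robust_bisimilar \<tau> lab s t"
  shows "lab s = lab t"
proof (rule ccontr)
  assume ne: "lab s \<noteq> lab t"
  then have st: "s \<noteq> t" by blast
  obtain P where P: "is_policy \<tau> lab P" "reaches_as P diag_pairs (s,t)"
    using assms unfolding robust_bisimilar_def by blast
  have Pst: "P (s,t) = return_pmf (s,t)"
    using P(1) ne unfolding is_policy_def diff_label_pairs_def by blast
  have z: "reach_within P diag_pairs n (s,t) = 0" for n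
  proof (induction n)
    case 0 then show ?case using st by simp
  next
    case (Suc n)
    have h: "pmf (P (s,t)) v * reach_within P diag_pairs n v = 0" for v
      using Suc.IH unfolding Pst by (cases "v = (s,t)") (auto simp: pmf_return)
    have "(\<Sum>v\<in>UNIV. pmf (P (s,t)) v * reach_within P diag_pairs n v) = 0" using h by (simp only: sum.neutral_const)
    then show ?case using st by simp
  qed
  have "(\<lambda>n. reach_within P diag_pairs n (s,t)) \<longlonglongrightarrow> 0" unfolding z by (rule tendsto_const)
  moreover have "(\<lambda>n. reach_within P diag_pairs n (s,t)) \<longlonglongrightarrow> 1" using P(2) unfolding reaches_as_def .
  ultimately show False using LIMSEQ_unique by fastforce
qed

lemma rob_succ:
  assumes P: "is_policy \<tau> lab P" "reaches_as P diag_pairs (s,t)" and st: "s \<noteq> t"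
    and v: "v \<in> set_pmf (P (s,t))"
  shows "reaches_as P diag_pairs v" "robust_bisimilar \<tau> lab (fst v) (snd v)"
proof -
  show r: "reaches_as P diag_pairs v" using reach_succ[OF P(2) _ v] st by simp
  then show "robust_bisimilar \<tau> lab (fst v) (snd v)"
    using P(1) unfolding robust_bisimilar_def by auto
qed

lemma policy_coup:
  assumes "is_policy \<tau> lab P" "lab s = lab t"
  shows "P (s,t) \<in> couplings (\<tau> s) (\<tau> t)"
  using assms unfolding is_policy_def diff_label_pairs_def by blast

lemma rob_coupling:
  assumes "robust_bisimilar \<tau> lab s t"
  shows "\<exists>\<omega>\<in>couplings (\<tau> s) (\<tau> t). set_pmf \<omega> \<subseteq> {(a,b). robust_bisimilar \<tau> lab a b}"
proof (cases "s = t")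
  case True
  have "set_pmf (map_pmf (\<lambda>a. (a,a)) (\<tau> s)) \<subseteq> {(a,b). robust_bisimilar \<tau> lab a b}"
    using rob_refl by auto
  then show ?thesis using diag_coup[of "\<tau> s"] True by blast
next
  case False
  obtain P where P: "is_policy \<tau> lab P" "reaches_as P diag_pairs (s,t)"
    using assms unfolding robust_bisimilar_def by blast
  have "P (s,t) \<in> couplings (\<tau> s) (\<tau> t)" using policy_coup[OF P(1) rob_lab[OF assms]] .
  moreover have "set_pmf (P (s,t)) \<subseteq> {(a,b). robust_bisimilar \<tau> lab a b}"
    using rob_succ(2)[OF P False] by auto
  ultimately show ?thesis by blast
qed

lemma dd_diag: "dd \<tau> lab (a,a) = 0"
proof -
  have "\<exists>P. is_policy \<tau> lab P \<and> reaches_as P diag_pairs (a,a) \<and> reach_within P diag_pairs 0 (a,a) > 0"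
    by (intro exI[of _ "P0 \<tau> lab"] conjI P0_policy reach_diag) simp
  then show ?thesis unfolding dd_def by (rule Least_eq_0)
qed

lemma dd_prog:
  assumes rob: "robust_bisimilar \<tau> lab s t" and st: "s \<noteq> t"
  shows "\<exists>\<omega>\<in>couplings (\<tau> s) (\<tau> t). set_pmf \<omega> \<subseteq> {(a,b). robust_bisimilar \<tau> lab a b}
           \<and> (\<exists>v\<in>set_pmf \<omega>. dd \<tau> lab v < dd \<tau> lab (s,t))"
proof -
  obtain P1 where P1: "is_policy \<tau> lab P1" "reaches_as P1 diag_pairs (s,t)"
    using rob unfolding robust_bisimilar_def by blast
  have "\<forall>\<^sub>F n in sequentially. 0 < reach_within P1 diag_pairs n (s,t)"
    using P1(2) unfolding reaches_as_def by (rule order_tendstoD(1)) simp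
  then obtain n0 where "0 < reach_within P1 diag_pairs n0 (s,t)"
    by (auto simp: eventually_sequentially)
  then have ex: "\<exists>n P. is_policy \<tau> lab P \<and> reaches_as P diag_pairs (s,t) \<and> reach_within P diag_pairs n (s,t) > 0"
    using P1 by blast
  define d where "d = dd \<tau> lab (s,t)"
  obtain P where P: "is_policy \<tau> lab P" "reaches_as P diag_pairs (s,t)" "reach_within P diag_pairs d (s,t) > 0"
    using LeastI_ex[of "\<lambda>n. \<exists>P. is_policy \<tau> lab P \<and> reaches_as P diag_pairs (s,t) \<and> reach_within P diag_pairs n (s,t) > 0"]
      ex unfolding d_def dd_def by blast
  have "d \<noteq> 0" using P(3) st by (cases d) auto
  then obtain m where m: "d = Suc m" by (cases d) auto
  have sp: "0 < (\<Sum>v\<in>UNIV. pmf (P (s,t)) v * reach_within P diag_pairs m v)"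
    using P(3) st unfolding m by simp
  have "\<exists>v. 0 < pmf (P (s,t)) v * reach_within P diag_pairs m v"
  proof (rule ccontr)
    assume a: "\<not> ?thesis"
    have "pmf (P (s,t)) v * reach_within P diag_pairs m v \<le> 0" for v
      using a not_less by blast
    then have "(\<Sum>v\<in>UNIV. pmf (P (s,t)) v * reach_within P diag_pairs m v) \<le> 0"
      by (intro sum_nonpos)
    then show False using sp by simp
  qed
  then obtain v where v: "0 < pmf (P (s,t)) v * reach_within P diag_pairs m v" by blast
  have pv: "pmf (P (s,t)) v \<noteq> 0" using v by auto
  then have vs: "v \<in> set_pmf (P (s,t))" by (simp add: set_pmf_iff)
  have rv: "0 < reach_within P diag_pairs m v"
    using v pmf_nonneg[of "P (s,t)" v] by (simp add: zero_less_mult_iff)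
  have "dd \<tau> lab v \<le> m"
    unfolding dd_def using P(1) rob_succ(1)[OF P(1,2) st vs] rv by (intro Least_le) blast
  then have lt: "dd \<tau> lab v < dd \<tau> lab (s,t)" using m d_def by simp
  have "P (s,t) \<in> couplings (\<tau> s) (\<tau> t)" using policy_coup[OF P(1) rob_lab[OF rob]] .
  moreover have "set_pmf (P (s,t)) \<subseteq> {(a,b). robust_bisimilar \<tau> lab a b}"
    using rob_succ(2)[OF P(1,2) st] by auto
  ultimately show ?thesis using vs lt by blast
qed

end




context
  fixes \<tau> :: "'s::finite \<Rightarrow> 's pmf" and lab :: "'s \<Rightarrow> 'l"
begin

lemma rob_trans:
  assumes st: "robust_bisimilar \<tau> lab s t" and tu: "robust_bisimilar \<tau> lab t u"
  shows "robust_bisimilar \<tau> lab s u"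
proof -
  let ?rb = "robust_bisimilar \<tau> lab"
  let ?d = "dd \<tau> lab"
  define K where "K = Suc (Max (range ?d))"
  have dK: "?d x < K" for x
  proof -
    have "?d x \<le> Max (range ?d)" by (rule Max_ge) auto
    then show ?thesis unfolding K_def by (rule le_imp_less_Suc)
  qed
  define X where "X = {x. \<exists>b. ?rb (fst x) b \<and> ?rb b (snd x)}"
  define rk where "rk x = (LEAST n. \<exists>b. ?rb (fst x) b \<and> ?rb b (snd x) \<and> n = ?d (fst x, b) * K + ?d (b, snd x))" for x
  have rk_le: "rk (a,c) \<le> ?d (a,b) * K + ?d (b,c)" if "?rb a b" "?rb b c" for a b c
    unfolding rk_def by (rule Least_le) (use that in auto)
  have rk_eq: "\<exists>b. ?rb (fst x) b \<and> ?rb b (snd x) \<and> rk x = ?d (fst x, b) * K + ?d (b, snd x)"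
    if "x \<in> X" for x
    unfolding rk_def by (rule LeastI_ex) (use that in \<open>auto simp: X_def\<close>)
  have step: "\<exists>\<omega>\<in>couplings (\<tau> (fst x)) (\<tau> (snd x)). set_pmf \<omega> \<subseteq> X \<and> (\<exists>v\<in>set_pmf \<omega>. rk v < rk x)"
    if xX: "x \<in> X" and xd: "x \<notin> diag_pairs" for x
  proof -
    obtain a c where x: "x = (a,c)" by (cases x)
    have ac: "a \<noteq> c" using xd x by simp
    obtain b where ab: "?rb a b" and bc: "?rb b c" and rkx: "rk x = ?d (a,b) * K + ?d (b,c)"
      using rk_eq[OF xX] x by auto
    show ?thesis
    proof (cases "a = b")
      case True
      then have bc': "b \<noteq> c" using ac by simp
      obtain \<omega>2 where \<omega>2: "\<omega>2 \<in> couplings (\<tau> b) (\<tau> c)" "set_pmf \<omega>2 \<subseteq> {(a,b). ?rb a b}"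
        and v2: "\<exists>v\<in>set_pmf \<omega>2. ?d v < ?d (b,c)"
        using dd_prog[OF bc bc'] by blast
      obtain b1 c1 where v2': "(b1,c1) \<in> set_pmf \<omega>2" "?d (b1,c1) < ?d (b,c)" using v2 by auto
      let ?\<omega>1 = "map_pmf (\<lambda>a. (a,a)) (\<tau> b)"
      obtain \<omega> where \<omega>: "\<omega> \<in> couplings (\<tau> b) (\<tau> c)"
        "set_pmf \<omega> = {(a,c). \<exists>b. (a,b) \<in> set_pmf ?\<omega>1 \<and> (b,c) \<in> set_pmf \<omega>2}"
        using glue[OF diag_coup \<omega>2(1)] by blast
      have b1: "b1 \<in> set_pmf (\<tau> b)" using coup_fst[OF \<omega>2(1) v2'(1)] .
      have vin: "(b1,c1) \<in> set_pmf \<omega>" using \<omega>(2) b1 v2'(1) by auto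
      have "rk (b1,c1) \<le> ?d (b1,b1) * K + ?d (b1,c1)"
        by (rule rk_le[OF rob_refl]) (use \<omega>2(2) v2'(1) in auto)
      then have lt: "rk (b1,c1) < rk x" using rkx True v2'(2) by (simp add: dd_diag)
      have sub: "set_pmf \<omega> \<subseteq> X"
      proof
        fix z assume "z \<in> set_pmf \<omega>"
        then obtain a' c' where z: "z = (a',c')" "(a',c') \<in> set_pmf \<omega>2" using \<omega>(2) by auto
        then show "z \<in> X" unfolding X_def using rob_refl[of \<tau> lab a'] \<omega>2(2) by auto
      qed
      show ?thesis using \<omega>(1) True x sub vin lt by auto
    next
      case False
      obtain \<omega>1 where \<omega>1: "\<omega>1 \<in> couplings (\<tau> a) (\<tau> b)" "set_pmf \<omega>1 \<subseteq> {(a,b). ?rb a b}"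
        and v1: "\<exists>v\<in>set_pmf \<omega>1. ?d v < ?d (a,b)"
        using dd_prog[OF ab False] by blast
      obtain a1 b1 where v1': "(a1,b1) \<in> set_pmf \<omega>1" "?d (a1,b1) < ?d (a,b)" using v1 by auto
      obtain \<omega>2 where \<omega>2: "\<omega>2 \<in> couplings (\<tau> b) (\<tau> c)" "set_pmf \<omega>2 \<subseteq> {(a,b). ?rb a b}"
        using rob_coupling[OF bc] by blast
      obtain \<omega> where \<omega>: "\<omega> \<in> couplings (\<tau> a) (\<tau> c)"
        "set_pmf \<omega> = {(a,c). \<exists>b. (a,b) \<in> set_pmf \<omega>1 \<and> (b,c) \<in> set_pmf \<omega>2}"
        using glue[OF \<omega>1(1) \<omega>2(1)] by blast
      have b1: "b1 \<in> set_pmf (\<tau> b)" using coup_snd[OF \<omega>1(1) v1'(1)] .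
      obtain c1 where c1: "(b1,c1) \<in> set_pmf \<omega>2" using coup_fst_ex[OF \<omega>2(1) b1] by blast
      have vin: "(a1,c1) \<in> set_pmf \<omega>" using \<omega>(2) v1'(1) c1 by auto
      have r1: "rk (a1,c1) \<le> ?d (a1,b1) * K + ?d (b1,c1)"
        by (rule rk_le) (use \<omega>1(2) \<omega>2(2) v1'(1) c1 in auto)
      have "Suc (?d (a1,b1)) * K \<le> ?d (a,b) * K" by (rule mult_le_mono1) (use v1'(2) in simp)
      then have m: "?d (a1,b1) * K + K \<le> ?d (a,b) * K" by simp
      have lt: "rk (a1,c1) < rk x" using r1 m dK[of "(b1,c1)"] rkx by linarith
      have sub: "set_pmf \<omega> \<subseteq> X"
      proof
        fix z assume "z \<in> set_pmf \<omega>"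
        then obtain a' b' c' where z: "z = (a',c')" "(a',b') \<in> set_pmf \<omega>1" "(b',c') \<in> set_pmf \<omega>2"
          using \<omega>(2) by auto
        then have "robust_bisimilar \<tau> lab a' b'" "robust_bisimilar \<tau> lab b' c'"
          using \<omega>1(2) \<omega>2(2) by auto
        then show "z \<in> X" unfolding X_def using z(1) by auto
      qed
      show ?thesis using \<omega>(1) x sub vin lt by auto
    qed
  qed
  define Q where "Q x \<omega> \<longleftrightarrow> \<omega> \<in> couplings (\<tau> (fst x)) (\<tau> (snd x)) \<and> set_pmf \<omega> \<subseteq> X \<and> (\<exists>v\<in>set_pmf \<omega>. rk v < rk x)" for x \<omega>
  define P3 where "P3 x = (if x \<in> X \<and> x \<notin> diag_pairs then (SOME \<omega>. Q x \<omega>) else P0 \<tau> lab x)" for x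
  have P3s: "Q x (P3 x)" if "x \<in> X" "x \<notin> diag_pairs" for x
  proof -
    have "\<exists>\<omega>. Q x \<omega>" using step[OF that] unfolding Q_def by blast
    then have "Q x (SOME \<omega>. Q x \<omega>)" by (rule someI_ex)
    then show ?thesis using that unfolding P3_def by simp
  qed
  have Xlab: "lab (fst x) = lab (snd x)" if "x \<in> X" for x
  proof -
    from that obtain b where "?rb (fst x) b" "?rb b (snd x)" unfolding X_def by blast
    then show ?thesis using rob_lab[of \<tau> lab "fst x" b] rob_lab[of \<tau> lab b "snd x"] by simp
  qed
  have pol: "is_policy \<tau> lab P3"
    unfolding is_policy_def
  proof (intro conjI allI impI)
    fix a b assume nd: "(a,b) \<notin> diff_label_pairs lab"
    show "P3 (a,b) \<in> couplings (\<tau> a) (\<tau> b)"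
    proof (cases "(a,b) \<in> X \<and> (a,b) \<notin> diag_pairs")
      case True then show ?thesis using P3s[of "(a,b)"] unfolding Q_def by simp
    next
      case False
      then have "P3 (a,b) = P0 \<tau> lab (a,b)" unfolding P3_def by auto
      then show ?thesis using P0_policy[of \<tau> lab] nd unfolding is_policy_def by simp
    qed
  next
    fix a b assume d: "(a,b) \<in> diff_label_pairs lab"
    then have "(a,b) \<notin> X" using Xlab[of "(a,b)"] by (auto simp: diff_label_pairs_def)
    then have "P3 (a,b) = P0 \<tau> lab (a,b)" unfolding P3_def by simp
    then show "P3 (a,b) = return_pmf (a,b)" using P0_policy[of \<tau> lab] d unfolding is_policy_def by simp
  qed
  have suX: "(s,u) \<in> X" using st tu unfolding X_def by auto
  have "reaches_as P3 diag_pairs (s,u)"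
  proof (rule rank_reach[where X=X and rank=rk])
    fix x assume "x \<in> X" "x \<notin> diag_pairs"
    then show "set_pmf (P3 x) \<subseteq> X" using P3s unfolding Q_def by blast
  next
    fix x assume "x \<in> X" "x \<notin> diag_pairs"
    then show "\<exists>v\<in>set_pmf (P3 x). rk v < rk x" using P3s unfolding Q_def by blast
  qed (rule suX)
  then show ?thesis using pol unfolding robust_bisimilar_def by blast
qed

end

theorem lemma1:
  fixes \<tau> :: "'s::finite \<Rightarrow> 's pmf" and lab :: "'s \<Rightarrow> 'l"
  assumes "card (range lab) \<ge> 2"
  shows "prob_bisimulation \<tau> lab {(s,t). robust_bisimilar \<tau> lab s t}
    \<and> equiv UNIV {(s,t). robust_bisimilar \<tau> lab s t}
    \<and> {(s,t). robust_bisimilar \<tau> lab s t} \<subseteq> {(s,t). bisimilar \<tau> lab s t}"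
proof -
  let ?R = "{(s,t). robust_bisimilar \<tau> lab s t}"
  have eq: "equiv UNIV ?R"
  proof (intro equivI refl_onI symI transI)
    show "?R \<subseteq> UNIV \<times> UNIV" by simp
  next
    fix x show "(x,x) \<in> ?R" using rob_refl by simp
  next
    fix x y assume "(x,y) \<in> ?R" then show "(y,x) \<in> ?R" using rob_sym by simp
  next
    fix x y z assume "(x,y) \<in> ?R" "(y,z) \<in> ?R" then show "(x,z) \<in> ?R" using rob_trans by simp
  qed
  have "\<forall>(s,t)\<in>?R. lab s = lab t \<and> (\<exists>\<omega>\<in>couplings (\<tau> s) (\<tau> t). set_pmf \<omega> \<subseteq> ?R)"
  proof (clarify)
    fix s t assume "robust_bisimilar \<tau> lab s t"
    then show "lab s = lab t \<and> (\<exists>\<omega>\<in>couplings (\<tau> s) (\<tau> t). set_pmf \<omega> \<subseteq> ?R)"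
      using rob_lab rob_coupling by blast
  qed
  then have bis: "prob_bisimulation \<tau> lab ?R" using eq unfolding prob_bisimulation_def by blast
  moreover have "?R \<subseteq> {(s,t). bisimilar \<tau> lab s t}"
    using bis unfolding bisimilar_def by blast
  ultimately show ?thesis using eq by blast
qed


end
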